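(* Let $f:\mathbb R^n\to\mathbb R$ be differentiable with $L$-Lipschitz gradient (w.r.t. $\|\cdot\|_2$). Let $\{x_t\}_{t\ge0}$, $\{L_t\}_{t\ge0}$ be generated by the AC-FW algorithm described in the context, where the damping sequence satisfies Condition (D), let $\eta>1$, and assume $L_0>0$. Then the complement $\mathbb Z_+\setminus\mathcal I_\eta$ is finite (hence $\mathcal I_\eta$ is infinite). Moreover, if $\{k_t\}_{t\ge0}$ denotes the elements of $\mathcal I_\eta$ in increasing order, then for every $t\ge 0$, $$t\le k_t\le t+\left\lfloor \log_\eta\!\left(\frac{L}{rL_0}\right)\right\rfloor .$$
   Context: Let $\mathcal A\subset\mathbb R^n$ be a compact set (the dictionary) and let the feasible set be $\mathcal X=\mathrm{conv}(\mathcal A)$ or $\mathcal X=\mathrm{lin}(\mathcal A)$. For $x\neq y$ let $\ell(x,y):=2|f(y)-f(x)-\nabla f(x)^\top(y-x)|/\|y-x\|_2^2$, and $\ell(x,x):=0$. AC-FW algorithm: given a damping sequence $\{r_t\}_{t\ge0}$ and a direction-finding subroutine, pick $x_{-1}\in\mathcal A$, $x_0\in\arg\min_{v\in\mathcal A}\nabla f(x_{-1})^\top v$, $L_0:=\ell(x_{-1},x_0)$. For $t=0,1,2,\dots$: choose $v_t\in\arg\min_{v\in\mathcal A}\nabla f(x_t)^\top v$; the subroutine returns $d_t\in\mathbb R^n$ and $\gamma_t^{\max}\in(0,\infty]$; set $\gamma_t:=\min\{\nabla f(x_t)^\top d_t/(L_t\|d_t\|_2^2),\gamma_t^{\max}\}$,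 $\bar x_{t+1}:=x_t-\gamma_t d_t$, $L_{t+1}:=\max\{\ell(x_t,\bar x_{t+1}),r_tL_t\}$, and $x_{t+1}:=\bar x_{t+1}$ if $f(\bar x_{t+1})<f(x_t)$, else $x_{t+1}:=x_t$. $\mathbb Z_+$ is the set of nonnegative integers. For $\eta>1$, $\mathcal I_\eta:=\{t\ge0: L_{t+1}\le \eta L_t\}$. Condition (D): $r_t\in(0,1]$ for all $t\ge0$ and $r:=\prod_{t\ge0}r_t\in(0,1]$. *)

theory Defs
  imports "HOL-Analysis.Analysis" "HOL-Library.Infinite_Set"
begin

definition ell :: "('a::euclidean_space \<Rightarrow> real) \<Rightarrow> ('a \<Rightarrow> 'a) \<Rightarrow> 'a \<Rightarrow> 'a \<Rightarrow> real" where
  "ell f grad x y = (if x = y then 0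
     else 2 * \<bar>f y - f x - grad x \<bullet> (y - x)\<bar> / (norm (y - x))^2)"

definition acfw_step :: "('a::euclidean_space \<Rightarrow> 'a) \<Rightarrow> 'a \<Rightarrow> 'a \<Rightarrow> real \<Rightarrow> ereal \<Rightarrow> real" where
  "acfw_step grad xt dt Lt gm =
     real_of_ereal (min (ereal ((grad xt \<bullet> dt) / (Lt * (norm dt)^2))) gm)"

text \<open>The sequences (xm1 = x_{-1}, x, xbar, Ls, v, d, gmax) are generated by AC-FW with
  dictionary A, damping sequence rs, and an arbitrary direction-finding subroutine
  (whose outputs are d t and gmax t).\<close>
definition acfw_run ::
  "'a::euclidean_space set \<Rightarrow> ('a \<Rightarrow> real) \<Rightarrow> ('a \<Rightarrow> 'a) \<Rightarrow> (nat \<Rightarrow> real) \<Rightarrow>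
   'a \<Rightarrow> (nat \<Rightarrow> 'a) \<Rightarrow> (nat \<Rightarrow> 'a) \<Rightarrow> (nat \<Rightarrow> real) \<Rightarrow> (nat \<Rightarrow> 'a) \<Rightarrow>
   (nat \<Rightarrow> 'a) \<Rightarrow> (nat \<Rightarrow> ereal) \<Rightarrow> bool" where
  "acfw_run A f grad rs xm1 x xbar Ls v d gmax \<longleftrightarrow>
     xm1 \<in> A \<and>
     x 0 \<in> A \<and> (\<forall>u\<in>A. grad xm1 \<bullet> x 0 \<le> grad xm1 \<bullet> u) \<and>
     Ls 0 = ell f grad xm1 (x 0) \<and>
     (\<forall>t. v t \<in> A \<and> (\<forall>u\<in>A. grad (x t) \<bullet> v t \<le> grad (x t) \<bullet> u)) \<and>
     (\<forall>t. 0 < gmax t) \<and>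
     (\<forall>t. xbar (Suc t) = x t - acfw_step grad (x t) (d t) (Ls t) (gmax t) *\<^sub>R d t) \<and>
     (\<forall>t. Ls (Suc t) = max (ell f grad (x t) (xbar (Suc t))) (rs t * Ls t)) \<and>
     (\<forall>t. x (Suc t) = (if f (xbar (Suc t)) < f (x t) then xbar (Suc t) else x t))"

definition I_eta :: "real \<Rightarrow> (nat \<Rightarrow> real) \<Rightarrow> nat set" where
  "I_eta \<eta> Ls = {t. Ls (Suc t) \<le> \<eta> * Ls t}"

end

theory Submission
  imports Defs
begin


lemma descent_upper:
  fixes f :: "'a::euclidean_space \<Rightarrow> real" and grad :: "'a \<Rightarrow> 'a"
  assumes der: "\<And>y. (f has_derivative (\<lambda>h. grad y \<bullet> h)) (at y)"
    and lip: "\<And>y z. norm (grad y - grad z) \<le> L * norm (y - z)"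
    and sg: "sg = 1 \<or> sg = -1"
  shows "sg * (f y - f x - grad x \<bullet> (y - x)) \<le> L / 2 * (norm (y - x))^2"
proof -
  define h where "h = y - x"
  define g where "g = (\<lambda>s. sg * (f (x + s *\<^sub>R h) - s * (grad x \<bullet> h)) - L / 2 * s^2 * (norm h)^2)"
  have "g 1 \<le> g 0"
  proof (rule DERIV_nonpos_imp_nonincreasing[of 0 1, OF zero_le_one])
    fix s :: real assume s: "0 \<le> s" "s \<le> 1"
    have d1: "((\<lambda>s. x + s *\<^sub>R h) has_derivative (\<lambda>k. k *\<^sub>R h)) (at s)"
      by (auto intro!: derivative_eq_intros)
    have d2: "((\<lambda>s. f (x + s *\<^sub>R h)) has_derivative (\<lambda>k. grad (x + s *\<^sub>R h) \<bullet> (k *\<^sub>R h))) (at s)"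
      using has_derivative_compose[OF d1 der] by (simp add: o_def)
    have d3: "((\<lambda>s. f (x + s *\<^sub>R h)) has_real_derivative (grad (x + s *\<^sub>R h) \<bullet> h)) (at s)"
    proof -
      have "(\<lambda>k. grad (x + s *\<^sub>R h) \<bullet> (k *\<^sub>R h)) = (*) (grad (x + s *\<^sub>R h) \<bullet> h)"
        by (rule ext) simp
      then show ?thesis unfolding has_field_derivative_def using d2 by simp
    qed
    have "(g has_real_derivative (sg * (grad (x + s *\<^sub>R h) \<bullet> h - grad x \<bullet> h) - L / 2 * (2 * s) * (norm h)^2)) (at s)"
      unfolding g_def
      by (rule derivative_eq_intros d3 | simp)+
    moreover have "sg * (grad (x + s *\<^sub>R h) \<bullet> h - grad x \<bullet> h) - L / 2 * (2 * s) * (norm h)^2 \<le> 0"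
    proof -
      have "sg * (grad (x + s *\<^sub>R h) \<bullet> h - grad x \<bullet> h) = (sg *\<^sub>R (grad (x + s *\<^sub>R h) - grad x)) \<bullet> h"
        by (simp add: inner_diff_left)
      also have "\<dots> \<le> norm (sg *\<^sub>R (grad (x + s *\<^sub>R h) - grad x)) * norm h"
        by (rule norm_cauchy_schwarz)
      also have "norm (sg *\<^sub>R (grad (x + s *\<^sub>R h) - grad x)) = norm (grad (x + s *\<^sub>R h) - grad x)"
        using sg by auto
      also have "norm (grad (x + s *\<^sub>R h) - grad x) * norm h \<le> (L * norm (s *\<^sub>R h)) * norm h"
        using lip[of "x + s *\<^sub>R h" x] by (simp add: mult_right_mono)
      also have "\<dots> = L / 2 * (2 * s) * (norm h)^2"
        using s by (simp add: power2_eq_square)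
      finally show ?thesis by simp
    qed
    ultimately show "\<exists>y. (g has_real_derivative y) (at s) \<and> y \<le> 0" by blast
  qed
  then show ?thesis unfolding g_def h_def by (simp add: algebra_simps)
qed

lemma ell_le:
  fixes f :: "'a::euclidean_space \<Rightarrow> real" and grad :: "'a \<Rightarrow> 'a"
  assumes der: "\<And>y. (f has_derivative (\<lambda>h. grad y \<bullet> h)) (at y)"
    and lip: "\<And>y z. norm (grad y - grad z) \<le> L * norm (y - z)"
  shows "ell f grad x y \<le> L"
proof -
  obtain b :: 'a where b: "b \<in> Basis" using nonempty_Basis by blast
  have "norm (grad b - grad 0) \<le> L * norm (b - 0)" by (rule lip)
  hence "norm (grad b - grad 0) \<le> L" using b by (simp add: norm_Basis)
  hence L0: "0 \<le> L" using norm_ge_zero[of "grad b - grad 0"] by linarith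
  show ?thesis
  proof (cases "x = y")
    case True thus ?thesis using L0 by (simp add: ell_def)
  next
    case False
    have h1: "f y - f x - grad x \<bullet> (y - x) \<le> L / 2 * (norm (y - x))^2"
      using descent_upper[OF der lip, of 1 y x] by simp
    have h2: "- (f y - f x - grad x \<bullet> (y - x)) \<le> L / 2 * (norm (y - x))^2"
      using descent_upper[OF der lip, of "-1" y x] by simp
    have u: "\<bar>f y - f x - grad x \<bullet> (y - x)\<bar> \<le> L / 2 * (norm (y - x))^2"
      using h1 h2 abs_le_iff[of "f y - f x - grad x \<bullet> (y - x)" "L / 2 * (norm (y - x))^2"] by linarith
    have p: "(norm (y - x))^2 > 0" using False by simp
    show ?thesis using False u p by (simp add: ell_def divide_le_eq)
  qed
qed


theorem lemma3:
  fixes A :: "'a::euclidean_space set" and f :: "'a \<Rightarrow> real" and grad :: "'a \<Rightarrow> 'a"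
    and L :: real and rs :: "nat \<Rightarrow> real" and r :: real and \<eta> :: real
    and xm1 :: 'a and x xbar v d :: "nat \<Rightarrow> 'a" and Ls :: "nat \<Rightarrow> real"
    and gmax :: "nat \<Rightarrow> ereal"
  assumes "compact A"
    and "\<And>y. (f has_derivative (\<lambda>h. grad y \<bullet> h)) (at y)"
    and "\<And>y z. norm (grad y - grad z) \<le> L * norm (y - z)"
    and "acfw_run A f grad rs xm1 x xbar Ls v d gmax"
    and "\<And>t. 0 < rs t \<and> rs t \<le> 1"
    and "rs has_prod r" and "0 < r" and "r \<le> 1"
    and "\<eta> > 1"
    and "Ls 0 > 0"
  shows "finite (UNIV - I_eta \<eta> Ls) \<and> infinite (I_eta \<eta> Ls) \<and>
         (\<forall>t. t \<le> enumerate (I_eta \<eta> Ls) t \<and>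
              real (enumerate (I_eta \<eta> Ls) t) \<le> real t + of_int \<lfloor>log \<eta> (L / (r * Ls 0))\<rfloor>)"
proof -
  note run = assms(4)[unfolded acfw_run_def]
  have ell: "\<And>a b. ell f grad a b \<le> L" by (rule ell_le[OF assms(2) assms(3)])
  have ell0: "\<And>a b. 0 \<le> ell f grad a b" by (simp add: ell_def)
  have L0: "Ls 0 = ell f grad xm1 (x 0)" using run by blast
  have LS: "\<And>t. Ls (Suc t) = max (ell f grad (x t) (xbar (Suc t))) (rs t * Ls t)" using run by blast
  have rs: "\<And>t. 0 < rs t" "\<And>t. rs t \<le> 1" using assms(5) by auto
  have pos: "\<And>t. 0 < Ls t"
  proof -
    fix t show "0 < Ls t"
      by (induction t) (use assms(10) LS rs in \<open>auto intro: less_max_iff_disj[THEN iffD2]\<close>)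
  qed
  have Lb: "\<And>t. Ls t \<le> L"
  proof -
    fix t show "Ls t \<le> L"
    proof (induction t)
      case 0 then show ?case using L0 ell by simp
    next
      case (Suc t)
      have "rs t * Ls t \<le> Ls t" using rs(2)[of t] pos[of t] by (simp add: mult_le_cancel_right1)
      then show ?case using Suc LS[of t] ell[of "x t" "xbar (Suc t)"] by simp
    qed
  qed
  have rprod: "\<And>T. r \<le> prod rs {..<T}"
  proof -
    fix T
    have raw: "(\<lambda>n. \<Prod>i\<le>n. rs i) \<longlonglongrightarrow> r"
      using assms(6) assms(7) unfolding has_prod_def raw_has_prod_def by auto
    have dec: "decseq (\<lambda>n. \<Prod>i\<le>n. rs i)"
    proof (rule decseq_SucI)
      fix n
      have "(\<Prod>i\<le>Suc n. rs i) = (\<Prod>i\<le>n. rs i) * rs (Suc n)" by simp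
      moreover have "0 \<le> (\<Prod>i\<le>n. rs i)" using rs(1) by (simp add: prod_nonneg less_imp_le)
      ultimately show "(\<Prod>i\<le>Suc n. rs i) \<le> (\<Prod>i\<le>n. rs i)"
        using rs(2)[of "Suc n"] by (simp add: mult_left_le)
    qed
    show "r \<le> prod rs {..<T}"
    proof (cases T)
      case 0 then show ?thesis using assms(8) by simp
    next
      case (Suc n)
      have "{..<T} = {..n}" using Suc by auto
      then show ?thesis using decseq_ge[OF dec raw, of n] by simp
    qed
  qed
  define C where "C = UNIV - I_eta \<eta> Ls"
  define m where "m = (\<lambda>T. card {t. t < T \<and> t \<in> C})"
  have key: "\<And>T. Ls 0 * \<eta> ^ m T * prod rs {..<T} \<le> Ls T"
  proof -
    fix T show "Ls 0 * \<eta> ^ m T * prod rs {..<T} \<le> Ls T"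
    proof (induction T)
      case 0 then show ?case by (simp add: m_def)
    next
      case (Suc T)
      have P0: "0 \<le> Ls 0 * \<eta> ^ m T * prod rs {..<T}"
        using pos[of 0] assms(9) rs(1) by (simp add: prod_nonneg less_imp_le)
      show ?case
      proof (cases "T \<in> C")
        case True
        have "{t. t < Suc T \<and> t \<in> C} = insert T {t. t < T \<and> t \<in> C}" using True by auto
        hence mS: "m (Suc T) = Suc (m T)" unfolding m_def by simp
        have lt: "\<eta> * Ls T < Ls (Suc T)" using True unfolding C_def I_eta_def by simp
        have "Ls 0 * \<eta> ^ m (Suc T) * prod rs {..<Suc T}
              = \<eta> * (Ls 0 * \<eta> ^ m T * prod rs {..<T}) * rs T" by (simp add: mS ac_simps)
        also have "\<dots> \<le> \<eta> * (Ls 0 * \<eta> ^ m T * prod rs {..<T})"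
          using P0 assms(9) rs(2)[of T] by (simp add: mult_left_le)
        also have "\<dots> \<le> \<eta> * Ls T" using Suc.IH assms(9) by simp
        finally show ?thesis using lt by simp
      next
        case False
        have "{t. t < Suc T \<and> t \<in> C} = {t. t < T \<and> t \<in> C}" using False less_Suc_eq by auto
        hence mS: "m (Suc T) = m T" unfolding m_def by simp
        have "Ls 0 * \<eta> ^ m (Suc T) * prod rs {..<Suc T}
              = (Ls 0 * \<eta> ^ m T * prod rs {..<T}) * rs T" by (simp add: mS ac_simps)
        also have "\<dots> \<le> Ls T * rs T" using Suc.IH rs(1)[of T] by (simp add: mult_right_mono)
        also have "\<dots> \<le> Ls (Suc T)" using LS[of T] by (simp add: mult.commute)
        finally show ?thesis .
      qed
    qed
  qed
  define K where "K = \<lfloor>log \<eta> (L / (r * Ls 0))\<rfloor>"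
  have mK: "\<And>T. int (m T) \<le> K"
  proof -
    fix T
    have "Ls 0 * \<eta> ^ m T * r \<le> Ls 0 * \<eta> ^ m T * prod rs {..<T}"
      using rprod[of T] pos[of 0] assms(9) by (simp add: mult_left_mono)
    also have "\<dots> \<le> L" using key[of T] Lb[of T] by simp
    finally have "\<eta> ^ m T \<le> L / (r * Ls 0)"
      using pos[of 0] assms(7) by (simp add: pos_le_divide_eq ac_simps)
    moreover have "0 < \<eta> ^ m T" using assms(9) by simp
    ultimately have "log \<eta> (\<eta> ^ m T) \<le> log \<eta> (L / (r * Ls 0))"
      using assms(9) log_le_cancel_iff[of \<eta> "\<eta> ^ m T" "L / (r * Ls 0)"] by linarith
    hence "real (m T) \<le> log \<eta> (L / (r * Ls 0))"
      using assms(9) by (simp add: log_nat_power)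
    thus "int (m T) \<le> K" unfolding K_def by (simp add: le_floor_iff)
  qed
  have finC: "finite C"
  proof (rule ccontr)
    assume "infinite C"
    then obtain S where S: "finite S" "S \<subseteq> C" "card S = Suc (nat K)"
      using infinite_arbitrarily_large by blast
    hence "S \<noteq> {}" by auto
    define T where "T = Suc (Max S)"
    have "S \<subseteq> {t. t < T \<and> t \<in> C}" using S unfolding T_def by (auto simp: le_imp_less_Suc)
    hence "card S \<le> m T" unfolding m_def by (intro card_mono) auto
    thus False using S(3) mK[of T] by linarith
  qed
  have infI: "infinite (I_eta \<eta> Ls)"
  proof
    assume "finite (I_eta \<eta> Ls)"
    hence "finite (I_eta \<eta> Ls \<union> C)" using finC by simp
    moreover have "I_eta \<eta> Ls \<union> C = UNIV" unfolding C_def by auto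
    ultimately show False by simp
  qed
  have cntI: "\<And>t. card {i. i < enumerate (I_eta \<eta> Ls) t \<and> i \<in> I_eta \<eta> Ls} = t"
  proof -
    fix t
    have "{i. i < enumerate (I_eta \<eta> Ls) t \<and> i \<in> I_eta \<eta> Ls} = enumerate (I_eta \<eta> Ls) ` {..<t}"
    proof safe
      fix i assume i: "i < enumerate (I_eta \<eta> Ls) t" "i \<in> I_eta \<eta> Ls"
      then obtain n where n: "enumerate (I_eta \<eta> Ls) n = i" using enumerate_Ex[OF infI] by blast
      hence "n < t" using i infI enumerate_mono_iff[OF infI, of n t] by metis
      thus "i \<in> enumerate (I_eta \<eta> Ls) ` {..<t}" using n by blast
    qed (use infI enumerate_in_set in auto)
    moreover have "inj_on (enumerate (I_eta \<eta> Ls)) {..<t}"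
      using inj_enumerate[OF infI] by (metis inj_on_subset subset_UNIV)
    ultimately show "card {i. i < enumerate (I_eta \<eta> Ls) t \<and> i \<in> I_eta \<eta> Ls} = t"
      by (simp add: card_image)
  qed
  have upper: "\<And>t. real (enumerate (I_eta \<eta> Ls) t) \<le> real t + of_int K"
  proof -
    fix t
    define k where "k = enumerate (I_eta \<eta> Ls) t"
    have "{..<k} = {i. i < k \<and> i \<in> I_eta \<eta> Ls} \<union> {i. i < k \<and> i \<in> C}" unfolding C_def by auto
    moreover have "{i. i < k \<and> i \<in> I_eta \<eta> Ls} \<inter> {i. i < k \<and> i \<in> C} = {}" unfolding C_def by auto
    ultimately have "card {..<k} = card {i. i < k \<and> i \<in> I_eta \<eta> Ls} + card {i. i < k \<and> i \<in> C}"
      by (metis (no_types, lifting) card_Un_disjoint finite_Un finite_lessThan)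
    hence "k = t + m k" using cntI[of t] unfolding k_def m_def by simp
    thus "real k \<le> real t + of_int K" using mK[of k] by linarith
  qed
  show ?thesis
    using finC infI upper le_enumerate[OF infI] unfolding C_def K_def by blast
qed

end
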